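(* Let $\mathrm{k}$ be an infinite field. For $n\in\{2,3\}$ and $P\in\mathrm{k}[T]$ with $\deg P\geq2$, the $\mathrm{k}$-algebra $\mathrm{k}[T]/(P^n)$ has infinitely many subalgebras.
   Context: Subalgebras are unital (contain $1$). *)

theory Defs
  imports "HOL-Computational_Algebra.Polynomial"
begin

text \<open>The k-algebra k[T]/(Q) is modelled concretely by its canonical representatives:
  the polynomials p with p mod Q = p, with addition, scalar multiplication by k,
  and multiplication (p, q) to (p * q) mod Q; its unit is 1 mod Q.\<close>

definition quot_rep :: "'a::field poly \<Rightarrow> 'a poly set" where
  "quot_rep Q = {p. p mod Q = p}"

definition quot_subalgebra :: "'a::field poly \<Rightarrow> 'a poly set \<Rightarrow> bool" where
  "quot_subalgebra Q A \<longleftrightarrow>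
     A \<subseteq> quot_rep Q \<and>
     (1 mod Q) \<in> A \<and>
     (\<forall>p\<in>A. \<forall>q\<in>A. p + q \<in> A) \<and>
     (\<forall>c. \<forall>p\<in>A. smult c p \<in> A) \<and>
     (\<forall>p\<in>A. \<forall>q\<in>A. (p * q) mod Q \<in> A)"

end

theory Submission
  imports Defs
begin

lemma key:
  fixes P :: "'k::field poly" and n :: nat
  assumes n: "n \<in> {2, 3}" and dP: "degree P \<ge> 2"
  shows "quot_subalgebra (P ^ n) {[:a:] + smult b (P^(n-1) * [:c,1:]) | a b. True}"
proof -
  define R where "R = P^(n-1) * [:c,1:]"
  define Q where "Q = P ^ n"
  have P0: "P \<noteq> 0" using dP by auto
  have dQ: "degree Q = n * degree P" unfolding Q_def by (simp add: degree_power_eq P0)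
  have dR: "degree R = (n-1) * degree P + 1" unfolding R_def
    by (subst degree_mult_eq) (simp_all add: degree_power_eq P0 del: mult_pCons_right)
  have lt: "(n-1) * degree P + 1 < n * degree P" using n dP by auto
  have Qdvd: "Q dvd R * R"
  proof -
    have "R * R = P^(n-1) * P^(n-1) * ([:c,1:] * [:c,1:])" unfolding R_def by (simp only: ac_simps)
    also have "P^(n-1) * P^(n-1) = P^n * P^(n-2)" using n by (auto simp: power_add[symmetric] power2_eq_square)
    finally have "R * R = P^n * (P^(n-2) * ([:c,1:] * [:c,1:]))" by (simp only: ac_simps)
    then show ?thesis unfolding Q_def by (rule dvdI)
  qed
  have small: "degree ([:a:] + smult b R) < degree Q" for a b
  proof -
    have "degree ([:a:] + smult b R) \<le> max (degree [:a:]) (degree (smult b R))" by (rule degree_add_le_max)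
    also have "\<dots> \<le> degree R" by auto
    finally show ?thesis using dR dQ lt by linarith
  qed
  have rep: "([:a:] + smult b R) mod Q = [:a:] + smult b R" for a b
    using small[of a b] by (simp add: mod_poly_less)
  have prod: "(([:a:] + smult b R) * ([:a':] + smult b' R)) mod Q
      = [:a*a':] + smult (a*b' + a'*b) R" for a b a' b'
  proof -
    have e: "([:a:] + smult b R) * ([:a':] + smult b' R)
      = ([:a*a':] + smult (a*b' + a'*b) R) + smult (b*b') (R*R)"
      by (simp add: algebra_simps smult_add_left)
    have "smult (b*b') (R*R) mod Q = 0" using Qdvd by (simp add: mod_smult_left)
    then have "(([:a*a':] + smult (a*b' + a'*b) R) + smult (b*b') (R*R)) mod Q
       = ([:a*a':] + smult (a*b' + a'*b) R) mod Q" by (simp add: poly_mod_add_left)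
    then show ?thesis unfolding e rep .
  qed
  have "degree (1::'k poly) < degree Q" using dQ dP n by auto
  then have "1 mod Q = 1" by (rule mod_poly_less)
  then have one: "1 mod Q = [:1:] + smult 0 R" by simp
  show ?thesis unfolding quot_subalgebra_def R_def[symmetric] Q_def[symmetric]
  proof (intro conjI ballI allI)
    show "{[:a:] + smult b R |a b. True} \<subseteq> quot_rep Q"
      using rep by (auto simp: quot_rep_def)
    show "1 mod Q \<in> {[:a:] + smult b R |a b. True}" using one by blast
    fix p q assume "p \<in> {[:a:] + smult b R |a b. True}" "q \<in> {[:a:] + smult b R |a b. True}"
    then obtain a b a' b' where p: "p = [:a:] + smult b R" and q: "q = [:a':] + smult b' R" by blast
    show "p + q \<in> {[:a:] + smult b R |a b. True}"
      by (rule CollectI, rule exI[of _ "a+a'"], rule exI[of _ "b+b'"])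
         (simp add: p q algebra_simps smult_add_left)
    show "p * q mod Q \<in> {[:a:] + smult b R |a b. True}" using prod p q by blast
  next
    fix c' p assume "p \<in> {[:a:] + smult b R |a b. True}"
    then obtain a b where p: "p = [:a:] + smult b R" by blast
    show "smult c' p \<in> {[:a:] + smult b R |a b. True}"
      by (rule CollectI, rule exI[of _ "c'*a"], rule exI[of _ "c'*b"])
         (simp add: p smult_add_right)
  qed
qed

lemma inj:
  fixes P :: "'k::field poly" and n :: nat
  assumes n: "n \<in> {2, 3}" and dP: "degree P \<ge> 2"
  shows "inj (\<lambda>c::'k. {[:a:] + smult b (P^(n-1) * [:c,1:]) | a b. True})"
proof (rule injI)
  fix c d :: 'k
  assume h: "{[:a:] + smult b (P^(n-1) * [:c,1:]) | a b. True} = {[:a:] + smult b (P^(n-1) * [:d,1:]) | a b. True}"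
  have "P^(n-1) * [:c,1:] \<in> {[:a:] + smult b (P^(n-1) * [:c,1:]) | a b. True}"
    by (rule CollectI, rule exI[of _ 0], rule exI[of _ 1]) simp
  then have "P^(n-1) * [:c,1:] \<in> {[:a:] + smult b (P^(n-1) * [:d,1:]) | a b. True}" using h by (simp only:)
  then obtain a b where e: "P^(n-1) * [:c,1:] = [:a:] + smult b (P^(n-1) * [:d,1:])" by blast
  define S where "S = P^(n-1)"
  have P0: "P \<noteq> 0" using dP by auto
  have S0: "S \<noteq> 0" using P0 by (simp add: S_def)
  have dS: "degree S \<ge> 2" unfolding S_def using n dP by (auto simp: degree_power_eq P0)
  have sw: "smult b (S * [:d,1:]) = S * smult b [:d,1:]" by (rule mult_smult_right[symmetric])
  have "S dvd [:a:]"
  proof -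
    have "[:a:] = S * [:c,1:] - S * smult b [:d,1:]" using e unfolding S_def[symmetric] sw by (simp del: mult_pCons_right)
    also have "S dvd \<dots>" by (intro dvd_diff dvd_triv_left)
    finally show ?thesis .
  qed
  have a0: "a = 0"
  proof (rule ccontr)
    assume "a \<noteq> 0"
    then have "degree S \<le> degree [:a:]" using \<open>S dvd [:a:]\<close> by (intro dvd_imp_degree_le) auto
    then show False using dS by simp
  qed
  then have "S * [:c,1:] = S * smult b [:d,1:]" using e unfolding S_def[symmetric] sw by (simp del: mult_pCons_right)
  then have "[:c,1:] = smult b [:d,1:]" using S0 mult_left_cancel by blast
  then show "c = d" by simp
qed

theorem lemma3p6:
  fixes P :: "'k::field poly" and n :: nat
  assumes "infinite (UNIV :: 'k set)"
    and "n \<in> {2, 3}"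
    and "degree P \<ge> 2"
  shows "infinite {A. quot_subalgebra (P ^ n) A}"
proof
  assume fin: "finite {A. quot_subalgebra (P ^ n) A}"
  have "range (\<lambda>c::'k. {[:a:] + smult b (P^(n-1) * [:c,1:]) | a b. True}) \<subseteq> {A. quot_subalgebra (P ^ n) A}"
    using key[OF assms(2,3)] by auto
  then have "finite (range (\<lambda>c::'k. {[:a:] + smult b (P^(n-1) * [:c,1:]) | a b. True}))"
    using fin finite_subset by blast
  then show False using assms(1) inj[OF assms(2,3)] finite_imageD by blast
qed

end
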